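(* Let $\alpha>0$, $\delta\ge0$ with $\alpha+\delta\le\pi$, and let $f$ be a spectral density on $\Lambda$ such that $f(\lambda)=0$ whenever $e^{i\lambda}\notin\Gamma_{\alpha,\delta}$. Then for every $n\in\mathbb N$, $$\sigma_n^2(f)\le 4c\,(\sin(\alpha/2))^{n-1}(\sin(\alpha/2+\delta))^{n-1},$$ where $c=r(0)=\int_\Lambda f(\lambda)\,d\lambda$.
   Context: $\Lambda=[-\pi,\pi]$. A spectral density is $f\ge0$, $f\in L^1(\Lambda)$, positive on a set of positive measure, with covariances $r(t)=\int_\Lambda e^{-it\lambda}f(\lambda)d\lambda$. $\sigma_n^2(f)=\min_{c_1,\dots,c_n\in\mathbb C}\int_\Lambda|1-\sum_{k=1}^n c_ke^{-ik\lambda}|^2f(\lambda)\,d\lambda$. $\Gamma_{\alpha,\delta}=\{e^{i\theta}:\theta\in[-(\delta+\alpha),-\delta]\cup[\delta,\delta+\alpha]\}$ (two arcs of length $\alpha$ at circular distance $2\delta$; for $\delta=0$ a single arc of length $2\alpha$). *)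

theory Defs
  imports "HOL-Analysis.Analysis"
begin

definition spectral_density :: "(real \<Rightarrow> real) \<Rightarrow> bool" where
  "spectral_density f \<longleftrightarrow>
     (\<forall>l\<in>{-pi..pi}. f l \<ge> 0) \<and>
     set_integrable lborel {-pi..pi} f \<and>
     emeasure lborel {l\<in>{-pi..pi}. f l > 0} > 0"

definition covariance :: "(real \<Rightarrow> real) \<Rightarrow> int \<Rightarrow> complex" where
  "covariance f t = (LINT l:{-pi..pi}|lborel. exp (- \<i> * of_int t * of_real l) * of_real (f l))"

definition sigma_sq :: "nat \<Rightarrow> (real \<Rightarrow> real) \<Rightarrow> real" where
  "sigma_sq n f = Inf {(LINT l:{-pi..pi}|lborel.
        (cmod (1 - (\<Sum>k=1..n. c k * exp (- \<i> * of_nat k * of_real l))))\<^sup>2 * f l)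
      | c :: nat \<Rightarrow> complex. True}"

definition Gamma_arcs :: "real \<Rightarrow> real \<Rightarrow> complex set" where
  "Gamma_arcs \<alpha> \<delta> = {cis \<theta> | \<theta>. \<theta> \<in> {-(\<delta>+\<alpha>)..-\<delta>} \<union> {\<delta>..\<delta>+\<alpha>}}"

end

theory Submission
  imports Defs "HOL-Computational_Algebra.Polynomial"
begin

fun chebQ :: "complex poly \<Rightarrow> nat \<Rightarrow> complex poly" where
  "chebQ L 0 = 1"
| "chebQ L (Suc 0) = L"
| "chebQ L (Suc (Suc k)) = smult 2 (L * chebQ L (Suc k)) - [:0,0,1:] * chebQ L k"

lemma chebQ_degree: "degree L \<le> 2 \<Longrightarrow> degree (chebQ L k) \<le> 2 * k"
proof (induction L k rule: chebQ.induct)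
  case (3 L k)
  have a: "degree (smult 2 (L * chebQ L (Suc k))) \<le> 2 * Suc (Suc k)"
    using 3 degree_mult_le[of L "chebQ L (Suc k)"] by (simp add: degree_smult_le order_trans[OF degree_smult_le])
  have b: "degree ([:0,0,1:] * chebQ L k) \<le> 2 * Suc (Suc k)"
    using 3 degree_mult_le[of "[:0,0,1::complex:]" "chebQ L k"] by simp
  show ?case using degree_diff_le[OF a b] by simp
qed auto

lemma chebQ_poly: "poly L z = z * complex_of_real (cos p) \<Longrightarrow>
   poly (chebQ L k) z = z ^ k * complex_of_real (cos (real k * p))"
proof (induction L k rule: chebQ.induct)
  case (3 L k)
  have e: "cos (real (Suc (Suc k)) * p) = 2 * cos p * cos (real (Suc k) * p) - cos (real k * p)"
  proof -
    have "cos (real (Suc k) * p + p) + cos (real (Suc k) * p - p) = 2 * cos p * cos (real (Suc k) * p)"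
      by (simp add: cos_add cos_diff)
    moreover have "real (Suc k) * p + p = real (Suc (Suc k)) * p" "real (Suc k) * p - p = real k * p"
      by (simp_all add: algebra_simps)
    ultimately show ?thesis by simp
  qed
  have "poly (chebQ L (Suc (Suc k))) z = 2 * (z * complex_of_real (cos p)) * (z ^ Suc k * complex_of_real (cos (real (Suc k) * p))) - z^2 * (z ^ k * complex_of_real (cos (real k * p)))"
    using 3 by (simp only: chebQ.simps poly_diff poly_smult poly_mult) (simp add: algebra_simps power2_eq_square)
  also have "\<dots> = z ^ Suc (Suc k) * complex_of_real (2 * cos p * cos (real (Suc k) * p) - cos (real k * p))"
    by (simp only: of_real_diff of_real_mult of_real_numeral) (simp add: algebra_simps power2_eq_square)
  finally show ?case by (simp only: e)
qed auto

lemma chebQ_0: "poly L 0 = c \<Longrightarrow> k \<ge> 1 \<Longrightarrow> poly (chebQ L k) 0 = c * (2*c) ^ (k - 1)"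
proof (induction L k rule: chebQ.induct)
  case (3 L k)
  then show ?case by (cases k) (auto simp: algebra_simps)
qed auto

lemma cis_sq: "cis t ^ 2 + 1 = 2 * cis t * complex_of_real (cos t)"
  by (simp add: complex_eq_iff power2_eq_square cos_double sin_double algebra_simps)

lemma poly_sum_le: fixes p :: "complex poly" assumes "degree p \<le> n" shows "poly p x = (\<Sum>i\<le>n. coeff p i * x ^ i)"
proof -
  have "(\<Sum>i\<le>degree p. coeff p i * x ^ i) = (\<Sum>i\<le>n. coeff p i * x ^ i)"
    using assms by (intro sum.mono_neutral_left) (auto simp: coeff_eq_0)
  then show ?thesis by (simp add: poly_altdef)
qed

theorem mainTheorem7:
  fixes \<alpha> \<delta> :: real and f :: "real \<Rightarrow> real" and n :: nat
  assumes "\<alpha> > 0" and "\<delta> \<ge> 0" and "\<alpha> + \<delta> \<le> pi"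
    and "spectral_density f"
    and "\<forall>l\<in>{-pi..pi}. cis l \<notin> Gamma_arcs \<alpha> \<delta> \<longrightarrow> f l = 0"
    and "n \<ge> 1"
  shows "sigma_sq n f \<le>
    4 * (LINT l:{-pi..pi}|lborel. f l) * (sin (\<alpha>/2)) ^ (n-1) * (sin (\<alpha>/2 + \<delta>)) ^ (n-1)"
proof -
  define s1 where "s1 = sin (\<alpha>/2)"
  define s2 where "s2 = sin (\<alpha>/2 + \<delta>)"
  define h where "h = s1 * s2"
  define c0 where "c0 = cos \<delta> - h"
  define m where "m = n div 2"
  have s1pos: "s1 > 0" unfolding s1_def using assms(1,2,3) by (intro sin_gt_zero) auto
  have s2pos: "s2 > 0" unfolding s2_def using assms(1,2,3) by (intro sin_gt_zero) auto
  have hpos: "h > 0" using s1pos s2pos by (simp add: h_def)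
  have hle: "h \<le> 1" unfolding h_def s1_def s2_def
    by (rule mult_le_one) (auto simp: sin_le_one s1pos[unfolded s1_def] s2pos[unfolded s2_def] less_imp_le)
  have cosda: "cos (\<delta> + \<alpha>) = cos \<delta> - 2 * h"
    using cos_diff_cos[of \<delta> "\<delta> + \<alpha>"] unfolding h_def s1_def s2_def
    by (simp add: algebra_simps add_divide_distrib)
  have fpos: "\<forall>l\<in>{-pi..pi}. f l \<ge> 0" using assms(4) by (simp add: spectral_density_def)
  have key: "-h \<le> cos l - c0 \<and> cos l - c0 \<le> h" if l: "l \<in> {-pi..pi}" "f l \<noteq> 0" for l
  proof -
    have "cis l \<in> Gamma_arcs \<alpha> \<delta>" using assms(5) l by blast
    then obtain \<theta> where th: "cis l = cis \<theta>" "\<theta> \<in> {-(\<delta>+\<alpha>)..-\<delta>} \<union> {\<delta>..\<delta>+\<alpha>}"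
      unfolding Gamma_arcs_def by blast
    have "cos l = Re (cis l)" by simp
    also have "\<dots> = cos \<theta>" using th(1) by simp
    finally have cl: "cos l = cos \<bar>\<theta>\<bar>" by (simp add: abs_if)
    have ab: "\<delta> \<le> \<bar>\<theta>\<bar>" "\<bar>\<theta>\<bar> \<le> \<delta> + \<alpha>" using th(2) assms(2) by auto
    have "cos \<bar>\<theta>\<bar> \<le> cos \<delta>" using ab assms by (intro cos_monotone_0_pi_le) auto
    moreover have "cos (\<delta> + \<alpha>) \<le> cos \<bar>\<theta>\<bar>" using ab assms by (intro cos_monotone_0_pi_le) auto
    ultimately show ?thesis using cl cosda by (simp add: c0_def)
  qed
  define L where "L = smult (complex_of_real (1/(2*h))) [:1, - 2 * complex_of_real c0, 1:]"
  define Q where "Q = chebQ L m"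
  define P where "P = smult (1 / poly Q 0) Q"
  have degL: "degree L \<le> 2" unfolding L_def by (rule order_trans[OF degree_smult_le]) simp
  have L0: "poly L 0 = complex_of_real (1/(2*h))" by (simp add: L_def)
  have Q0: "cmod (1 / poly Q 0) \<le> 2 * h ^ m \<and> poly Q 0 \<noteq> 0"
  proof (cases m)
    case 0 then show ?thesis using hpos by (simp add: Q_def)
  next
    case (Suc m')
    have "poly Q 0 = complex_of_real (1/(2*h)) * (2 * complex_of_real (1/(2*h))) ^ m'"
      using chebQ_0[OF L0, of m] Suc by (simp add: Q_def)
    also have "\<dots> = complex_of_real (1 / (2 * h ^ m))"
      using hpos Suc by (simp add: field_simps power_divide)
    finally show ?thesis using hpos by (simp add: norm_divide norm_power)
  qed
  have degP: "degree P \<le> n"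
    using chebQ_degree[OF degL, of m] degree_smult_le[of "1 / poly Q 0" Q] unfolding P_def Q_def m_def
    by linarith
  have coeffP0: "coeff P 0 = 1" using Q0 by (simp add: P_def poly_0_coeff_0[symmetric])
  have bound: "cmod (poly P (cis (-l))) \<le> 2 * h ^ m" if l: "l \<in> {-pi..pi}" "f l \<noteq> 0" for l
  proof -
    define z where "z = cis (-l)"
    define X where "X = (cos l - c0) / h"
    have X1: "-1 \<le> X" "X \<le> 1" using key[OF l] hpos by (auto simp: X_def field_simps)
    define p where "p = arccos X"
    have cp: "cos p = X" using X1 by (simp add: p_def cos_arccos)
    have zz: "z^2 = 2 * z * complex_of_real (cos l) - 1"
      using cis_sq[of "-l"] by (simp add: z_def algebra_simps eq_diff_eq)
    have "poly L z = complex_of_real (1/(2*h)) * (1 - 2 * complex_of_real c0 * z + z^2)"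
      by (simp add: L_def power2_eq_square algebra_simps add_divide_distrib)
    also have "\<dots> = complex_of_real (1/(2*h)) * (2 * z * complex_of_real (cos l) - 2 * complex_of_real c0 * z)"
      by (simp add: zz)
    also have "\<dots> = z * complex_of_real (cos p)"
      using hpos by (simp add: cp X_def field_simps)
    finally have "poly Q z = z ^ m * complex_of_real (cos (real m * p))"
      unfolding Q_def by (rule chebQ_poly)
    then have "cmod (poly Q z) \<le> 1" by (simp add: z_def norm_mult norm_power abs_cos_le_one)
    then have "cmod (poly P z) \<le> cmod (1 / poly Q 0) * 1"
      by (simp add: P_def norm_divide divide_right_mono)
    then show ?thesis using Q0 unfolding z_def by linarith
  qed
  define cc where "cc k = - coeff P k" for k
  have eqP: "1 - (\<Sum>k=1..n. cc k * exp (- \<i> * of_nat k * of_real l)) = poly P (cis (-l))" for l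
  proof -
    have e: "exp (- \<i> * of_nat k * of_real l) = cis (-l) ^ k" for k
    proof -
      have "exp (- \<i> * of_nat k * of_real l) = exp (of_nat k * (- (\<i> * complex_of_real l)))"
        by (simp add: algebra_simps)
      also have "\<dots> = exp (- (\<i> * complex_of_real l)) ^ k" by (rule exp_of_nat_mult)
      also have "\<dots> = cis (-l) ^ k" by (simp add: cis_conv_exp)
      finally show ?thesis .
    qed
    have s: "{..n} = insert 0 {1..n}" by auto
    have "poly P (cis (-l)) = (\<Sum>i\<le>n. coeff P i * cis (-l) ^ i)" by (rule poly_sum_le[OF degP])
    also have "\<dots> = 1 + (\<Sum>i=1..n. coeff P i * cis (-l) ^ i)"
      by (simp add: s coeffP0)
    finally show ?thesis by (simp only: e cc_def) (simp add: sum_negf)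
  qed
  define K where "K = 4 * h ^ (2*m)"
  define I where "I = (LINT l:{-pi..pi}|lborel.
        (cmod (1 - (\<Sum>k=1..n. cc k * exp (- \<i> * of_nat k * of_real l))))\<^sup>2 * f l)"
  define A where "A = {(LINT l:{-pi..pi}|lborel.
        (cmod (1 - (\<Sum>k=1..n. c k * exp (- \<i> * of_nat k * of_real l))))\<^sup>2 * f l)
      | c :: nat \<Rightarrow> complex. True}"
  have mem: "I \<in> A" unfolding A_def I_def by blast
  have bdd: "bdd_below A"
  proof (rule bdd_belowI)
    fix x assume "x \<in> A"
    then obtain c :: "nat \<Rightarrow> complex" where x: "x = (LINT l:{-pi..pi}|lborel.
        (cmod (1 - (\<Sum>k=1..n. c k * exp (- \<i> * of_nat k * of_real l))))\<^sup>2 * f l)"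
      unfolding A_def by blast
    show "0 \<le> x" unfolding x set_lebesgue_integral_def
      by (rule Bochner_Integration.integral_nonneg) (use fpos in \<open>auto simp: indicator_def\<close>)
  qed
  have sig: "sigma_sq n f \<le> I" unfolding sigma_sq_def A_def[symmetric] by (rule cInf_lower[OF mem bdd])
  have intf: "0 \<le> (LINT l:{-pi..pi}|lborel. f l)" unfolding set_lebesgue_integral_def
      by (rule Bochner_Integration.integral_nonneg) (use fpos in \<open>auto simp: indicator_def\<close>)
  have Ile: "I \<le> K * (LINT l:{-pi..pi}|lborel. f l)"
  proof (cases "set_integrable lborel {-pi..pi} (\<lambda>l. (cmod (1 - (\<Sum>k=1..n. cc k * exp (- \<i> * of_nat k * of_real l))))\<^sup>2 * f l)")
    case True
    have fi: "set_integrable lborel {-pi..pi} f" using assms(4) by (simp add: spectral_density_def)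
    have "I \<le> (LINT l:{-pi..pi}|lborel. K * f l)" unfolding I_def
    proof (rule set_integral_mono[OF True])
      show "set_integrable lborel {-pi..pi} (\<lambda>l. K * f l)" using fi by auto
      fix l assume l: "l \<in> {-pi..pi}"
      show "(cmod (1 - (\<Sum>k=1..n. cc k * exp (- \<i> * of_nat k * of_real l))))\<^sup>2 * f l \<le> K * f l"
      proof (cases "f l = 0")
        case False
        have b: "cmod (poly P (cis (-l))) \<le> 2 * h ^ m" by (rule bound[OF l False])
        have "(cmod (poly P (cis (-l))))\<^sup>2 \<le> (2 * h ^ m)\<^sup>2" by (rule power_mono[OF b]) simp
        also have "\<dots> = K" by (simp add: K_def power_mult_distrib power_mult[symmetric] mult.commute)
        finally show ?thesis using fpos l unfolding eqP by (simp add: mult_right_mono)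
      qed simp
    qed
    then show ?thesis by simp
  next
    case False
    have "I = 0" using False unfolding I_def set_lebesgue_integral_def set_integrable_def
      by (simp add: not_integrable_integral_eq)
    then show ?thesis using intf hpos by (simp add: K_def)
  qed
  have hp: "h ^ (2*m) \<le> h ^ (n-1)" using hpos hle by (intro power_decreasing) (auto simp: m_def)
  have "I \<le> 4 * (LINT l:{-pi..pi}|lborel. f l) * h ^ (n-1)"
    using Ile mult_left_mono[OF hp intf] unfolding K_def by (simp add: mult_ac)
  then show ?thesis using sig unfolding h_def s1_def s2_def by (simp add: power_mult_distrib mult_ac)
qed

end
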